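(* Let $n\ge 3$. In the Game of Cycles on the $C_n$ board (a cycle graph with $n$ vertices and $n$ edges embedded in the plane, with its single bounded cell), the outcome is determined by the parity of $n$ regardless of how the players play: if $n$ is odd, Player~1 wins, and if $n$ is even, Player~2 wins.
   Context: The Game of Cycles. A board is a simple connected planar graph embedded in the plane, together with its bounded cells. Two players alternate turns; on a turn a player marks one unmarked edge with an arrow pointing along the edge in one of its two directions. Each edge receives at most one arrow, and arrows have the same effect regardless of who placed them. Moves must obey the sink-source rule: no move may create a sink (a vertex all of whose incident edges are marked with arrows pointing toward it) or a source (a vertex all of whose incident edges are marked with arrows pointing away from it). A player who has a legal move must make one. A cycle cell is a bounded cell all of whose boundary edges are marked with arrows all cycling in the same direction around that cell. The first player to create a cycle cell wins; if play ends (no legal move remains) without a cycle cell, the player who made the last move wins. *)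

theory Defs
  imports Main
begin

(* The unique bounded cell has all n edges on its boundary.
   A position records, for each edge, either None (unmarked) or Some h, meaning the
   arrow on that edge points towards its endpoint h (h is the head). *)

type_synonym position = "nat \<Rightarrow> nat option"
type_synonym move = "nat \<times> nat"   (* (edge, head vertex) *)

definition ends :: "nat \<Rightarrow> nat \<Rightarrow> nat set" where
  "ends n e = {e, Suc e mod n}"

definition incident :: "nat \<Rightarrow> nat \<Rightarrow> nat set" where
  "incident n v = {e. e < n \<and> v \<in> ends n e}"

definition is_sink :: "nat \<Rightarrow> position \<Rightarrow> nat \<Rightarrow> bool" where
  "is_sink n p v = (\<forall>e\<in>incident n v. p e = Some v)"

definition is_source :: "nat \<Rightarrow> position \<Rightarrow> nat \<Rightarrow> bool" where
  "is_source n p v = (\<forall>e\<in>incident n v. \<exists>h. p e = Some h \<and> h \<noteq> v)"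

definition cycle_cell :: "nat \<Rightarrow> position \<Rightarrow> bool" where
  "cycle_cell n p = ((\<forall>e<n. p e = Some (Suc e mod n)) \<or> (\<forall>e<n. p e = Some e))"

definition apply_move :: "position \<Rightarrow> move \<Rightarrow> position" where
  "apply_move p mv = p(fst mv := Some (snd mv))"

definition legal :: "nat \<Rightarrow> position \<Rightarrow> move \<Rightarrow> bool" where
  "legal n p mv = (fst mv < n \<and> p (fst mv) = None \<and> snd mv \<in> ends n (fst mv) \<and>
     (\<forall>v<n. \<not> is_sink n (apply_move p mv) v \<and> \<not> is_source n (apply_move p mv) v))"

definition empty_pos :: position where
  "empty_pos = (\<lambda>_. None)"

definition run :: "move list \<Rightarrow> position" where
  "run ms = foldl apply_move empty_pos ms"

definition valid_play :: "nat \<Rightarrow> move list \<Rightarrow> bool" where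
  "valid_play n ms = (\<forall>i<length ms.
      \<not> cycle_cell n (run (take i ms)) \<and> legal n (run (take i ms)) (ms ! i))"

definition complete_play :: "nat \<Rightarrow> move list \<Rightarrow> bool" where
  "complete_play n ms = (valid_play n ms \<and>
      (cycle_cell n (run ms) \<or> \<not> (\<exists>mv. legal n (run ms) mv)))"

definition mover :: "nat \<Rightarrow> nat" where
  "mover i = (if even i then 1 else 2)"

(* winner of a finished nonempty game: the creator of the cycle cell if the last move
   created one, otherwise the player who made the last move; in both cases this is
   the maker of the last move *)
definition winner :: "nat \<Rightarrow> move list \<Rightarrow> nat" where
  "winner n ms = (if cycle_cell n (run ms) then mover (length ms - 1)
                  else mover (length ms - 1))"

end

theory Submission
  imports Defs
begin
definition nx :: "nat \<Rightarrow> nat \<Rightarrow> nat" where "nx n e = Suc e mod n"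
definition pv :: "nat \<Rightarrow> nat \<Rightarrow> nat" where "pv n v = (if v = 0 then n - 1 else v - 1)"

lemma nx_eq: "e < n \<Longrightarrow> nx n e = (if Suc e = n then 0 else Suc e)"
  by (auto simp: nx_def)
lemma nx_lt: "e < n \<Longrightarrow> nx n e < n" by (simp add: nx_eq)
lemma pv_lt: "v < n \<Longrightarrow> pv n v < n" by (auto simp: pv_def)
lemma nx_pv: "v < n \<Longrightarrow> nx n (pv n v) = v" by (auto simp: pv_def nx_eq)
lemma pv_nx: "e < n \<Longrightarrow> pv n (nx n e) = e" by (auto simp: pv_def nx_eq)
lemma nx_neq: "n \<ge> 2 \<Longrightarrow> e < n \<Longrightarrow> nx n e \<noteq> e" by (auto simp: nx_eq)
lemma pv_neq: "n \<ge> 2 \<Longrightarrow> v < n \<Longrightarrow> pv n v \<noteq> v" by (auto simp: pv_def)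
lemma nx_inj: "a < n \<Longrightarrow> b < n \<Longrightarrow> nx n a = nx n b \<Longrightarrow> a = b"
  by (metis pv_nx)

lemma incident_eq: "v < n \<Longrightarrow> incident n v = {v, pv n v}"
  unfolding incident_def ends_def
  using nx_pv[of v n] pv_lt[of v n] pv_nx[of _ n]
  by (auto simp: nx_def[symmetric])

lemma sink_iff: "v < n \<Longrightarrow> is_sink n p v \<longleftrightarrow> p v = Some v \<and> p (pv n v) = Some v"
  by (simp add: is_sink_def incident_eq)
lemma source_iff: "v < n \<Longrightarrow> is_source n p v \<longleftrightarrow>
   (\<exists>h. p v = Some h \<and> h \<noteq> v) \<and> (\<exists>h. p (pv n v) = Some h \<and> h \<noteq> v)"
  by (simp add: is_source_def incident_eq)

lemma run_snoc: "run (ms @ [m]) = apply_move (run ms) m"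
  by (simp add: run_def)

lemma valid_snoc: "valid_play n (ms @ [m]) \<longleftrightarrow>
   valid_play n ms \<and> \<not> cycle_cell n (run ms) \<and> legal n (run ms) m"
  by (auto simp: valid_play_def nth_append less_Suc_eq)

lemma inv: "valid_play n ms \<Longrightarrow>
  (\<forall>e. run ms e \<noteq> None \<longrightarrow> e < n \<and> (run ms e = Some e \<or> run ms e = Some (nx n e))) \<and>
  finite {e. run ms e \<noteq> None} \<and> card {e. run ms e \<noteq> None} = length ms"
proof (induction ms rule: rev_induct)
  case Nil
  then show ?case by (simp add: run_def empty_pos_def)
next
  case (snoc m ms)
  obtain e h where m: "m = (e, h)" by force
  from snoc.prems have v: "valid_play n ms" and l: "legal n (run ms) m"
    by (auto simp: valid_snoc)
  from snoc.IH[OF v] have IH: "\<forall>e. run ms e \<noteq> None \<longrightarrow> e < n \<and> (run ms e = Some e \<or> run ms e = Some (nx n e))"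
    "finite {e. run ms e \<noteq> None}" "card {e. run ms e \<noteq> None} = length ms" by auto
  from l m have le: "e < n" "run ms e = None" "h = e \<or> h = nx n e"
    by (auto simp: legal_def ends_def nx_def)
  have S: "{x. run (ms @ [m]) x \<noteq> None} = insert e {x. run ms x \<noteq> None}"
    by (auto simp: run_snoc apply_move_def m)
  have A: "\<forall>x. run (ms @ [m]) x \<noteq> None \<longrightarrow> x < n \<and> (run (ms @ [m]) x = Some x \<or> run (ms @ [m]) x = Some (nx n x))"
    using IH(1) le by (auto simp: run_snoc apply_move_def m)
  have B: "e \<notin> {x. run ms x \<noteq> None}" using le by simp
  show ?case unfolding S using A IH(2,3) B by simp
qed

definition wfp :: "nat \<Rightarrow> position \<Rightarrow> bool" where
  "wfp n p = (\<forall>e<n. p e = None \<or> p e = Some e \<or> p e = Some (nx n e))"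
definition okp :: "nat \<Rightarrow> position \<Rightarrow> bool" where
  "okp n p = (\<forall>v<n. \<not> is_sink n p v \<and> \<not> is_source n p v)"

lemma legal_fw:
  assumes n: "n \<ge> 3" and w: "wfp n p" and ok: "okp n p" and e: "e < n" "p e = None"
    and c1: "p (nx n e) \<noteq> Some (nx n e)" and c2: "p (pv n e) \<noteq> Some (pv n e)"
  shows "legal n p (e, nx n e)"
proof -
  let ?q = "p(e := Some (nx n e))"
  have ne: "nx n e \<noteq> e" "pv n e \<noteq> e" using nx_neq pv_neq n e by auto
  have "\<not> is_sink n ?q v \<and> \<not> is_source n ?q v" if v: "v < n" for v
  proof -
    consider "v = e" | "v = nx n e" | "v \<noteq> e \<and> v \<noteq> nx n e" by blast
    then show ?thesis
    proof cases
      case 1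
      have "p (pv n e) = None \<or> p (pv n e) = Some e" using w c2 pv_lt[OF e(1)] nx_pv[OF e(1)] unfolding wfp_def by metis
      then show ?thesis using 1 v ne
        unfolding sink_iff[OF v] source_iff[OF v] by auto
    next
      case 2
      then show ?thesis using v ne c1 pv_nx[OF e(1)]
        unfolding sink_iff[OF v] source_iff[OF v] by auto
    next
      case 3
      have "pv n v \<noteq> e" using 3 nx_pv[OF v] by metis
      moreover have "\<not> is_sink n p v \<and> \<not> is_source n p v" using ok v unfolding okp_def by auto
      ultimately show ?thesis using 3 unfolding sink_iff[OF v] source_iff[OF v] by auto
    qed
  qed
  then show ?thesis using e unfolding legal_def apply_move_def ends_def nx_def by auto
qed

lemma legal_bw:
  assumes n: "n \<ge> 3" and w: "wfp n p" and ok: "okp n p" and e: "e < n" "p e = None"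
    and c1: "p (nx n e) \<noteq> Some (nx n (nx n e))" and c2: "p (pv n e) \<noteq> Some e"
  shows "legal n p (e, e)"
proof -
  let ?q = "p(e := Some e)"
  have ne: "nx n e \<noteq> e" "pv n e \<noteq> e" using nx_neq pv_neq n e by auto
  have ne2: "nx n (nx n e) \<noteq> nx n e" using nx_neq n nx_lt e by auto
  have "\<not> is_sink n ?q v \<and> \<not> is_source n ?q v" if v: "v < n" for v
  proof -
    consider "v = e" | "v = nx n e" | "v \<noteq> e \<and> v \<noteq> nx n e" by blast
    then show ?thesis
    proof cases
      case 1
      then show ?thesis using v ne c2
        unfolding sink_iff[OF v] source_iff[OF v] by auto
    next
      case 2
      have "p (nx n e) = None \<or> p (nx n e) = Some (nx n e)" using w c1 nx_lt[OF e(1)] unfolding wfp_def by auto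
      then show ?thesis using 2 v ne pv_nx[OF e(1)]
        unfolding sink_iff[OF v] source_iff[OF v] by auto
    next
      case 3
      have "pv n v \<noteq> e" using 3 nx_pv[OF v] by metis
      moreover have "\<not> is_sink n p v \<and> \<not> is_source n p v" using ok v unfolding okp_def by auto
      ultimately show ?thesis using 3 unfolding sink_iff[OF v] source_iff[OF v] by auto
    qed
  qed
  then show ?thesis using e unfolding legal_def apply_move_def ends_def nx_def by auto
qed

lemma consistent:
  assumes n: "n \<ge> 3" and w: "wfp n p" and ok: "okp n p" and e: "e < n"
    and m: "p e \<noteq> None" "p (nx n e) \<noteq> None"
  shows "p e = Some (nx n e) \<longleftrightarrow> p (nx n e) = Some (nx n (nx n e))"
proof -
  define v where "v = nx n e"
  have v: "v < n" using nx_lt e v_def by simp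
  have pe: "pv n v = e" using pv_nx e v_def by simp
  have ne: "v \<noteq> e" "nx n v \<noteq> v" using nx_neq n e v v_def by auto
  have "p v = Some v \<or> p v = Some (nx n v)" "p e = Some e \<or> p e = Some v"
    using w m v e unfolding wfp_def v_def by auto
  moreover have "\<not> is_sink n p v" "\<not> is_source n p v" using ok v unfolding okp_def by auto
  ultimately show ?thesis unfolding sink_iff[OF v] source_iff[OF v] pe v_def[symmetric]
    using ne by auto
qed


lemma final_props:
  assumes n: "n \<ge> 3" and v: "valid_play n ms" and ne: "ms \<noteq> []"
  shows "wfp n (run ms)" "okp n (run ms)"
proof -
  show "wfp n (run ms)" using inv[OF v] unfolding wfp_def by blast
  obtain ms' m where ms: "ms = ms' @ [m]" using ne by (metis rev_exhaust)
  have "legal n (run ms') m" using v unfolding ms valid_snoc by simp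
  then show "okp n (run ms)" unfolding ms run_snoc legal_def okp_def by blast
qed

lemma nx_bij: "bij_betw (nx n) {..<n} {..<n}"
proof -
  have i: "inj_on (nx n) {..<n}" unfolding inj_on_def using nx_inj by blast
  have "nx n ` {..<n} \<subseteq> {..<n}" using nx_lt by auto
  then have "nx n ` {..<n} = {..<n}" using i by (simp add: endo_inj_surj)
  then show ?thesis using i by (simp add: bij_betw_def)
qed

lemma final_even:
  assumes n: "n \<ge> 3" and c: "complete_play n ms" and ne: "ms \<noteq> []"
  shows "even (card {e. e < n \<and> run ms e = None})"
proof -
  define p where "p = run ms"
  have v: "valid_play n ms" using c unfolding complete_play_def by simp
  have w: "wfp n p" and ok: "okp n p" using final_props[OF n v ne] p_def by auto
  consider "cycle_cell n p" | "\<not> (\<exists>mv. legal n p mv)" using c unfolding complete_play_def p_def by blast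
  then show ?thesis
  proof cases
    case 1
    have "{e. e < n \<and> run ms e = None} = {}" using 1 unfolding cycle_cell_def p_def by force
    then show ?thesis by (simp only: card.empty) simp
  next
    case 2
    have dead: "(p (nx n e) = Some (nx n e) \<or> p (pv n e) = Some (pv n e)) \<and>
       (p (nx n e) = Some (nx n (nx n e)) \<or> p (pv n e) = Some e)" if e: "e < n" "p e = None" for e
      using legal_fw[OF n w ok e] legal_bw[OF n w ok e] 2 by blast
    define \<sigma> :: "nat \<Rightarrow> int" where "\<sigma> e = (if p e = None then (if p (pv n e) = Some e then 1 else -1)
        else (if p e = Some (nx n e) then 1 else -1))" for e
    have key: "\<sigma> e * \<sigma> (nx n e) = (if p e = None then -1 else 1)" if e: "e < n" for e
    proof -
      have d: "pv n e \<noteq> e" "nx n e \<noteq> e" "nx n (nx n e) \<noteq> nx n e" "nx n (pv n e) = e"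
        "pv n (nx n e) = e"
        using pv_neq nx_neq nx_lt nx_pv pv_nx n e by auto
      show ?thesis
      proof (cases "p e = None")
        case True
        note dd = dead[OF e True]
        have "p (nx n e) \<noteq> None" using dd d by auto
        then show ?thesis using dd d True unfolding \<sigma>_def by auto
      next
        case False
        show ?thesis
        proof (cases "p (nx n e) = None")
          case True
          then show ?thesis using False d unfolding \<sigma>_def by auto
        next
          case F2: False
          have "p e = Some (nx n e) \<longleftrightarrow> p (nx n e) = Some (nx n (nx n e))"
            using consistent[OF n w ok e False F2] .
          then show ?thesis using False F2 unfolding \<sigma>_def by auto
        qed
      qed
    qed
    have sq: "\<sigma> e * \<sigma> e = 1" for e unfolding \<sigma>_def by auto
    have "(\<Prod>e<n. \<sigma> e * \<sigma> (nx n e)) = (\<Prod>e<n. \<sigma> e) * (\<Prod>e<n. \<sigma> (nx n e))"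
      by (rule prod.distrib)
    also have "(\<Prod>e<n. \<sigma> (nx n e)) = (\<Prod>e<n. \<sigma> e)"
      using prod.reindex_bij_betw[OF nx_bij] by blast
    also have "(\<Prod>e<n. \<sigma> e) * (\<Prod>e<n. \<sigma> e) = (\<Prod>e<n. \<sigma> e * \<sigma> e)"
      by (rule prod.distrib[symmetric])
    also have "\<dots> = 1" using sq by simp
    finally have P1: "(\<Prod>e<n. \<sigma> e * \<sigma> (nx n e)) = 1" .
    have "(\<Prod>e<n. \<sigma> e * \<sigma> (nx n e)) = (\<Prod>e<n. (if p e = None then -1 else 1::int))"
      using key by simp
    also have "\<dots> = (\<Prod>e\<in>{..<n} \<inter> {x. p x = None}. -1) * (\<Prod>e\<in>{..<n} \<inter> - {x. p x = None}. 1)"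
      by (rule prod.If_cases) simp
    also have "\<dots> = (-1) ^ card {e. e < n \<and> run ms e = None}"
    proof -
      have "{..<n} \<inter> {x. p x = None} = {e. e < n \<and> run ms e = None}" unfolding p_def by auto
      then show ?thesis by simp
    qed
    finally have "(-1::int) ^ card {e. e < n \<and> run ms e = None} = 1" using P1 by simp
    then show ?thesis by (cases "even (card {e. e < n \<and> run ms e = None})") auto
  qed
qed

theorem theorem4p3:
  fixes n :: nat and ms :: "move list"
  assumes "n \<ge> 3" and "complete_play n ms"
  shows "ms \<noteq> [] \<and> (odd n \<longrightarrow> winner n ms = 1) \<and> (even n \<longrightarrow> winner n ms = 2)"
proof -
  have n: "n \<ge> 3" using assms by simp
  have ne: "ms \<noteq> []"
  proof
    assume ms: "ms = []"
    have w: "wfp n empty_pos" "okp n empty_pos"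
      unfolding wfp_def okp_def empty_pos_def using sink_iff source_iff by auto
    have "legal n empty_pos (0, nx n 0)"
      by (rule legal_fw[OF n w]) (use n in \<open>auto simp: empty_pos_def\<close>)
    moreover have "\<not> cycle_cell n empty_pos" using n unfolding cycle_cell_def empty_pos_def by (auto intro!: exI[of _ 0])
    ultimately show False using assms(2) unfolding ms complete_play_def run_def by auto
  qed
  have v: "valid_play n ms" using assms(2) unfolding complete_play_def by simp
  define U where "U = {e. e < n \<and> run ms e = None}"
  have ev: "even (card U)" using final_even[OF n assms(2) ne] U_def by simp
  have I: "finite {e. run ms e \<noteq> None}" "card {e. run ms e \<noteq> None} = length ms"
    "\<forall>e. run ms e \<noteq> None \<longrightarrow> e < n" using inv[OF v] by auto
  have "{e. run ms e \<noteq> None} = {..<n} - U" using I(3) unfolding U_def by auto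
  moreover have "U \<subseteq> {..<n}" unfolding U_def by auto
  moreover have fU: "finite U" using \<open>U \<subseteq> {..<n}\<close> finite_subset by blast
  ultimately have L: "length ms = n - card U" "card U \<le> n" using I(2)
    by (auto simp: card_Diff_subset dest: card_mono[of "{..<n}" U, simplified])
  have "length ms \<ge> 1" using ne by (cases ms) auto
  then show ?thesis using ne ev L unfolding winner_def mover_def by auto
qed

end
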